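(* Let $n\ge3$, $m=n-1$, and consider $$(P):\ \sup\ x_{n-1}\ \text{ s.t. }\ x_1E_1+\sum_{i=2}^{n-2}x_i(E_i+E_{i-1,n})+x_{n-1}(-E_{n-1}+E_{n-2,n})\preceq I_{n-1}\oplus 0_1,$$ with dual $(D)$. Then $\operatorname{val}(P)=0$ and $(D)$ is infeasible, so $\operatorname{val}(D)=+\infty$.
   Context: $E_{ij}\in\mathcal S^n$ is the symmetric matrix whose only nonzero entries are $1$ in positions $(i,j)$ and $(j,i)$; $E_i:=E_{ii}$. For $(P)$: $\sup\{c^Tx:\sum_ix_iA_i\preceq B\}$ the dual is $(D)$: $\inf\{B\bullet Y:A_i\bullet Y=c_i\ \forall i,\ Y\succeq0\}$, $S\bullet T=\operatorname{trace}(ST)$, with $\inf\emptyset=+\infty$. *)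

theory Defs
  imports Complex_Main "HOL-Library.Extended_Real"
begin

text \<open>n x n real matrices are represented as functions nat => nat => real,
  indexed by {1..n} x {1..n}; entries outside this range are irrelevant.\<close>

definition Emat :: "nat \<Rightarrow> nat \<Rightarrow> nat \<Rightarrow> nat \<Rightarrow> real" where
  "Emat i j = (\<lambda>a b. if (a = i \<and> b = j) \<or> (a = j \<and> b = i) then 1 else 0)"

definition sym_mat :: "nat \<Rightarrow> (nat \<Rightarrow> nat \<Rightarrow> real) \<Rightarrow> bool" where
  "sym_mat n M \<longleftrightarrow> (\<forall>a\<in>{1..n}. \<forall>b\<in>{1..n}. M a b = M b a)"

definition psd :: "nat \<Rightarrow> (nat \<Rightarrow> nat \<Rightarrow> real) \<Rightarrow> bool" where
  "psd n M \<longleftrightarrow> sym_mat n M \<and>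
     (\<forall>v :: nat \<Rightarrow> real. 0 \<le> (\<Sum>a=1..n. \<Sum>b=1..n. v a * M a b * v b))"

definition loewner_le :: "nat \<Rightarrow> (nat \<Rightarrow> nat \<Rightarrow> real) \<Rightarrow> (nat \<Rightarrow> nat \<Rightarrow> real) \<Rightarrow> bool" where
  "loewner_le n A B \<longleftrightarrow> psd n (\<lambda>a b. B a b - A a b)"

definition frob :: "nat \<Rightarrow> (nat \<Rightarrow> nat \<Rightarrow> real) \<Rightarrow> (nat \<Rightarrow> nat \<Rightarrow> real) \<Rightarrow> real" where
  "frob n S T = (\<Sum>a=1..n. \<Sum>b=1..n. S a b * T b a)"

definition primal_feasible ::
  "nat \<Rightarrow> nat \<Rightarrow> (nat \<Rightarrow> nat \<Rightarrow> nat \<Rightarrow> real) \<Rightarrow> (nat \<Rightarrow> nat \<Rightarrow> real) \<Rightarrow> (nat \<Rightarrow> real) \<Rightarrow> bool" where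
  "primal_feasible n m A B x \<longleftrightarrow> loewner_le n (\<lambda>a b. \<Sum>i=1..m. x i * A i a b) B"

definition primal_val ::
  "nat \<Rightarrow> nat \<Rightarrow> (nat \<Rightarrow> nat \<Rightarrow> nat \<Rightarrow> real) \<Rightarrow> (nat \<Rightarrow> nat \<Rightarrow> real) \<Rightarrow> (nat \<Rightarrow> real) \<Rightarrow> ereal" where
  "primal_val n m A B c =
     Sup ((\<lambda>x. ereal (\<Sum>i=1..m. c i * x i)) ` {x. primal_feasible n m A B x})"

text \<open>Dual (D): inf B . Y s.t. A_i . Y = c_i, Y psd (symmetric); inf of empty set = +infinity.\<close>
definition dual_feasible ::
  "nat \<Rightarrow> nat \<Rightarrow> (nat \<Rightarrow> nat \<Rightarrow> nat \<Rightarrow> real) \<Rightarrow> (nat \<Rightarrow> real) \<Rightarrow> (nat \<Rightarrow> nat \<Rightarrow> real) \<Rightarrow> bool" where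
  "dual_feasible n m A c Y \<longleftrightarrow> (\<forall>i\<in>{1..m}. frob n (A i) Y = c i) \<and> psd n Y"

definition dual_val ::
  "nat \<Rightarrow> nat \<Rightarrow> (nat \<Rightarrow> nat \<Rightarrow> nat \<Rightarrow> real) \<Rightarrow> (nat \<Rightarrow> nat \<Rightarrow> real) \<Rightarrow> (nat \<Rightarrow> real) \<Rightarrow> ereal" where
  "dual_val n m A B c =
     Inf ((\<lambda>Y. ereal (frob n B Y)) ` {Y. dual_feasible n m A c Y})"

definition Aex :: "nat \<Rightarrow> nat \<Rightarrow> nat \<Rightarrow> nat \<Rightarrow> real" where
  "Aex n i =
     (if i = 1 then Emat 1 1
      else if 2 \<le> i \<and> i \<le> n - 2 then (\<lambda>a b. Emat i i a b + Emat (i - 1) n a b)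
      else if i = n - 1 then (\<lambda>a b. - Emat (n - 1) (n - 1) a b + Emat (n - 2) n a b)
      else (\<lambda>a b. 0))"

definition Bmat_ex :: "nat \<Rightarrow> nat \<Rightarrow> nat \<Rightarrow> real" where
  "Bmat_ex n = (\<lambda>a b. if a = b \<and> 1 \<le> a \<and> a \<le> n - 1 then 1 else 0)"

definition cex :: "nat \<Rightarrow> nat \<Rightarrow> real" where
  "cex n = (\<lambda>i. if i = n - 1 then 1 else 0)"

end

theory Submission imports Defs begin
lemma frob_Emat:
  assumes "i \<in> {1..n}" "j \<in> {1..n}"
  shows "frob n (Emat i j) Y = (if i = j then Y i i else Y i j + Y j i)"
proof -
  have e: "\<And>a b. Emat i j a b * Y b a = (if a = i then (if b = j then Y b a else 0) else 0)
     + (if a = j \<and> i \<noteq> j then (if b = i then Y b a else 0) else 0)"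
    unfolding Emat_def by auto
  show ?thesis unfolding frob_def e using assms
    by (simp add: sum.distrib sum.If_cases)
qed

lemma frob_add: "frob n (\<lambda>a b. S a b + T a b) Y = frob n S Y + frob n T Y"
  unfolding frob_def by (simp add: sum.distrib algebra_simps)
lemma frob_neg: "frob n (\<lambda>a b. - S a b) Y = - frob n S Y"
  unfolding frob_def by (simp add: sum_negf)


lemma psd_diag: assumes "psd n M" "a \<in> {1..n}" shows "M a a \<ge> 0"
proof -
  define v where "v = (\<lambda>x::nat. if x = a then (1::real) else 0)"
  from assms(1) have "0 \<le> (\<Sum>i=1..n. \<Sum>j=1..n. v i * M i j * v j)"
    unfolding psd_def by blast
  also have "\<dots> = M a a"
  proof -
    have r: "(\<Sum>j=1..n. v i * M i j * v j) = (if i = a then M a a else 0)" for i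
    proof -
      have "\<And>j. v i * M i j * v j = (if j = a then v i * M i a else 0)"
        unfolding v_def by auto
      thus ?thesis using assms(2) unfolding v_def by simp
    qed
    show ?thesis unfolding r using assms(2) by simp
  qed
  finally show ?thesis .
qed

lemma psd_zero: assumes "psd n M" "a \<in> {1..n}" "b \<in> {1..n}" "M a a = 0" shows "M a b = 0"
proof (rule ccontr)
  assume nz: "M a b \<noteq> 0"
  hence ab: "a \<noteq> b" using assms by auto
  define s where "s = - (M b b + 1) / (2 * M a b)"
  define v where "v = (\<lambda>x::nat. if x = a then s else if x = b then 1 else (0::real))"
  have sym: "M b a = M a b" using assms unfolding psd_def sym_mat_def by auto
  have "0 \<le> (\<Sum>i=1..n. \<Sum>j=1..n. v i * M i j * v j)" using assms(1) unfolding psd_def by blast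
  also have "\<dots> = v a * M a a * v a + v a * M a b * v b + v b * M b a * v a + v b * M b b * v b"
  proof -
    have r: "(\<Sum>j=1..n. v i * M i j * v j) = v i * M i a * v a + v i * M i b * v b" for i
    proof -
      have "\<And>j. v i * M i j * v j = (if j = a then v i * M i a * v a else 0) + (if j = b then v i * M i b * v b else 0)"
        using ab by (simp add: v_def)
      hence "(\<Sum>j=1..n. v i * M i j * v j) = (\<Sum>j=1..n. (if j = a then v i * M i a * v a else 0) + (if j = b then v i * M i b * v b else 0))"
        by simp
      also have "\<dots> = v i * M i a * v a + v i * M i b * v b"
        using assms(2,3) by (simp only: sum.distrib sum.delta finite_atLeastAtMost if_True)
      finally show ?thesis .
    qed
    have e2: "\<And>i. v i * M i a * v a + v i * M i b * v b = (if i = a then v a * M a a * v a + v a * M a b * v b else 0)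
       + (if i = b then v b * M b a * v a + v b * M b b * v b else 0)"
      using ab by (simp add: v_def)
    have "(\<Sum>i=1..n. \<Sum>j=1..n. v i * M i j * v j) = (\<Sum>i=1..n. (if i = a then v a * M a a * v a + v a * M a b * v b else 0)
       + (if i = b then v b * M b a * v a + v b * M b b * v b else 0))"
      unfolding r by (rule sum.cong[OF refl e2])
    also have "\<dots> = v a * M a a * v a + v a * M a b * v b + v b * M b a * v a + v b * M b b * v b"
      using assms(2,3) by (simp only: sum.distrib sum.delta finite_atLeastAtMost if_True add.assoc)
    finally show ?thesis .
  qed
  also have "\<dots> = -1" unfolding v_def s_def using ab nz sym assms(4) by (simp add: field_simps)
  finally show False by simp
qed

lemma Aex_nn: assumes "n \<ge> 3" "i \<in> {1..n-1}" shows "Aex n i n n = 0"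
  using assms unfolding Aex_def Emat_def by auto

lemma Aex_n_nm2: assumes "n \<ge> 3" "i \<in> {1..n-1}" shows "Aex n i n (n-2) = (if i = n - 1 then 1 else 0)"
  using assms unfolding Aex_def Emat_def by auto

lemma B_psd: "psd n (Bmat_ex n)"
proof -
  have "sym_mat n (Bmat_ex n)" unfolding sym_mat_def Bmat_ex_def by auto
  moreover have "0 \<le> (\<Sum>a=1..n. \<Sum>b=1..n. v a * Bmat_ex n a b * v b)" for v :: "nat \<Rightarrow> real"
  proof -
    have r: "(\<Sum>b=1..n. v a * Bmat_ex n a b * v b) = (if a \<le> n - 1 \<and> 1 \<le> a then v a * v a else 0)" if "a \<in> {1..n}" for a
    proof -
      have "\<And>b. v a * Bmat_ex n a b * v b = (if b = a then (if a \<le> n - 1 \<and> 1 \<le> a then v a * v a else 0) else 0)"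
        unfolding Bmat_ex_def by auto
      thus ?thesis using that by simp
    qed
    have "(\<Sum>a=1..n. \<Sum>b=1..n. v a * Bmat_ex n a b * v b) = (\<Sum>a=1..n. (if a \<le> n - 1 \<and> 1 \<le> a then v a * v a else 0))"
      by (rule sum.cong[OF refl r])
    also have "\<dots> \<ge> 0" by (rule sum_nonneg) auto
    finally show ?thesis by simp
  qed
  ultimately show ?thesis unfolding psd_def by blast
qed

lemma primal_x: assumes n: "n \<ge> 3" and f: "primal_feasible n (n - 1) (Aex n) (Bmat_ex n) x"
  shows "x (n - 1) = 0"
proof -
  define M where "M = (\<lambda>a b. Bmat_ex n a b - (\<Sum>i=1..n-1. x i * Aex n i a b))"
  have p: "psd n M" using f unfolding primal_feasible_def loewner_le_def M_def by simp
  have "M n n = 0" unfolding M_def using n by (simp add: Aex_nn Bmat_ex_def)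
  hence "M n (n-2) = 0" using psd_zero[OF p] n by simp
  moreover have "(\<Sum>i=1..n-1. x i * Aex n i n (n-2)) = (\<Sum>i=1..n-1. if i = n - 1 then x i else 0)"
    by (rule sum.cong[OF refl]) (use n in \<open>simp add: Aex_n_nm2\<close>)
  moreover have "Bmat_ex n n (n-2) = 0" unfolding Bmat_ex_def by simp
  moreover have "(1::nat) \<le> n - 1" using n by linarith
  ultimately show ?thesis unfolding M_def by simp
qed

lemma frob_A1: assumes "n \<ge> 3" shows "frob n (Aex n 1) Y = Y 1 1"
  using assms by (simp add: Aex_def frob_Emat)

lemma frob_Amid: assumes "n \<ge> 3" "2 \<le> i" "i \<le> n - 2"
  shows "frob n (Aex n i) Y = Y i i + Y (i-1) n + Y n (i-1)"
proof -
  have "Aex n i = (\<lambda>a b. Emat i i a b + Emat (i - 1) n a b)" using assms by (simp add: Aex_def)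
  moreover have "frob n (Emat (i-1) n) Y = Y (i - 1) n + Y n (i - 1)"
  proof -
    have "1 \<le> i - 1" "i - 1 \<le> n" "i - 1 \<noteq> n" using assms by linarith+
    thus ?thesis using frob_Emat[of "i-1" n n Y] by simp
  qed
  moreover have "frob n (Emat i i) Y = Y i i"
    using frob_Emat[of i n i Y] assms by simp
  ultimately show ?thesis by (simp add: frob_add)
qed

lemma frob_Alast: assumes "n \<ge> 3"
  shows "frob n (Aex n (n-1)) Y = - Y (n-1) (n-1) + Y (n-2) n + Y n (n-2)"
proof -
  have h1: "n - 1 \<noteq> 1" "\<not> (n - 1 \<le> n - 2)" using assms by linarith+
  have "Aex n (n-1) = (\<lambda>a b. - Emat (n-1) (n-1) a b + Emat (n-2) n a b)"
    unfolding Aex_def using h1 by auto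
  moreover have "frob n (Emat (n-2) n) Y = Y (n - 2) n + Y n (n - 2)"
  proof -
    have "1 \<le> n - 2" "n - 2 \<noteq> n" using assms by linarith+
    thus ?thesis using frob_Emat[of "n-2" n n Y] by simp
  qed
  moreover have "frob n (Emat (n-1) (n-1)) Y = Y (n-1) (n-1)"
    using frob_Emat[of "n-1" n "n-1" Y] assms by simp
  ultimately show ?thesis by (simp only: frob_add frob_neg)
qed

lemma dual_infeas: assumes n: "n \<ge> 3" shows "\<not> dual_feasible n (n - 1) (Aex n) (cex n) Y"
proof
  assume d: "dual_feasible n (n - 1) (Aex n) (cex n) Y"
  have p: "psd n Y" using d unfolding dual_feasible_def by blast
  have eq: "frob n (Aex n i) Y = cex n i" if "i \<in> {1..n-1}" for i
    using d that unfolding dual_feasible_def by blast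
  have sym: "Y a b = Y b a" if "a \<in> {1..n}" "b \<in> {1..n}" for a b
    using p that unfolding psd_def sym_mat_def by blast
  have Y11: "Y 1 1 = 0" using eq[of 1] n frob_A1[OF n] by (simp add: cex_def)
  have key: "1 \<le> k \<longrightarrow> k \<le> n - 2 \<longrightarrow> Y k n = 0" for k
  proof (induction k)
    case 0 show ?case by simp
  next
    case (Suc k)
    show ?case
    proof (intro impI)
      assume a: "1 \<le> Suc k" "Suc k \<le> n - 2"
      show "Y (Suc k) n = 0"
      proof (cases "k = 0")
        case True
        thus ?thesis using psd_zero[OF p, of 1 n] Y11 n by simp
      next
        case False
        hence IH: "Y k n = 0" using Suc a by simp
        have "Y n k = 0" using IH sym[of n k] a False by simp
        have "frob n (Aex n (Suc k)) Y = cex n (Suc k)" using eq[of "Suc k"] a by simp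
        hence "Y (Suc k) (Suc k) = 0"
          using frob_Amid[OF n, of "Suc k"] a False IH \<open>Y n k = 0\<close> by (simp add: cex_def)
        thus ?thesis using psd_zero[OF p, of "Suc k" n] a by simp
      qed
    qed
  qed
  have Yn2: "Y (n-2) n = 0" using key[of "n-2"] n by simp
  hence "Y n (n-2) = 0" using sym[of n "n-2"] n by simp
  hence "Y (n-1) (n-1) = -1" using eq[of "n-1"] frob_Alast[OF n] Yn2 n by (simp add: cex_def)
  moreover have "Y (n-1) (n-1) \<ge> 0" using psd_diag[OF p] n by simp
  ultimately show False by simp
qed

theorem mainTheorem7:
  fixes n :: nat
  assumes "n \<ge> 3"
  shows "primal_val n (n - 1) (Aex n) (Bmat_ex n) (cex n) = 0
       \<and> \<not> (\<exists>Y. dual_feasible n (n - 1) (Aex n) (cex n) Y)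
       \<and> dual_val n (n - 1) (Aex n) (Bmat_ex n) (cex n) = \<infinity>"
proof -
  have obj: "(\<Sum>i=1..n-1. cex n i * x i) = x (n - 1)" for x :: "nat \<Rightarrow> real"
  proof -
    have "(\<Sum>i=1..n-1. cex n i * x i) = (\<Sum>i=1..n-1. if i = n - 1 then x i else 0)"
      by (rule sum.cong) (auto simp: cex_def)
    moreover have "(1::nat) \<le> n - 1" using assms by linarith
    ultimately show ?thesis by simp
  qed
  have f0: "primal_feasible n (n - 1) (Aex n) (Bmat_ex n) (\<lambda>_. 0)"
    unfolding primal_feasible_def loewner_le_def using B_psd by simp
  have img: "(\<lambda>x. ereal (\<Sum>i=1..n-1. cex n i * x i)) ` {x. primal_feasible n (n - 1) (Aex n) (Bmat_ex n) x} = {0}" (is "?L = _")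
  proof
    show "{0} \<subseteq> ?L" using f0 obj[of "\<lambda>_. 0"] by (force simp: zero_ereal_def image_iff)
    show "?L \<subseteq> {0}"
    proof
      fix y assume "y \<in> ?L"
      then obtain x where "primal_feasible n (n - 1) (Aex n) (Bmat_ex n) x"
        "y = ereal (\<Sum>i=1..n-1. cex n i * x i)" by blast
      thus "y \<in> {0}" using primal_x[OF assms] obj[of x] by (simp add: zero_ereal_def)
    qed
  qed
  have nd: "\<not> (\<exists>Y. dual_feasible n (n - 1) (Aex n) (cex n) Y)" using dual_infeas[OF assms] by blast
  have e: "{Y. dual_feasible n (n - 1) (Aex n) (cex n) Y} = {}" using nd by blast
  show ?thesis
    unfolding primal_val_def dual_val_def img e using nd by (simp add: top_ereal_def)
qed
end
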